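(* Let $V_1,V_2$ be $\mathbb{N}$-valued random variables, $(X_k)_{k\ge1}$ and $(Y_k)_{k\ge1}$ sequences of i.i.d. nonnegative random variables, with $V_1,V_2,(X_k)_{k\ge1},(Y_k)_{k\ge1}$ independent. Let $r\in(1,2]$ and assume $\mathbb{E}[X_1^r+Y_1^r]<+\infty$ and $\mathbb{E}[V_1^r+V_2^r]<+\infty$. If $r=2$, $$\mathbb{E}\Big[\Big(\sum_{i=1}^{V_1}X_i+\sum_{i=1}^{V_2}Y_i\Big)^2\Big]=\mathbb{E}[V_1]\mathrm{Var}(X_1)+\mathbb{E}[V_2]\mathrm{Var}(Y_1)+2\mathbb{E}[V_1]\mathbb{E}[V_2]\mathbb{E}[X_1]\mathbb{E}[Y_1]+\mathbb{E}[V_1^2]\mathbb{E}[X_1]^2+\mathbb{E}[V_2^2]\mathbb{E}[Y_1]^2,$$ while if $r\in(1,2)$, $$\mathbb{E}\Big[\Big(\sum_{i=1}^{V_1}X_i+\sum_{i=1}^{V_2}Y_i\Big)^r\Big]\le\mathbb{E}[V_1]\mathbb{E}[X_1^r]+\mathbb{E}[V_2]\mathbb{E}[Y_1^r]+\big(2\mathbb{E}[V_1]\mathbb{E}[V_2]\mathbb{E}[X_1]\mathbb{E}[Y_1]\big)^{r/2}+\mathbb{E}[V_1^r]\mathbb{E}[X_1]^r+\mathbb{E}[V_2^r]\mathbb{E}[Y_1]^r.$$ *)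

theory Defs
  imports "HOL-Probability.Probability"
begin

datatype rv_index = IV1 | IV2 | IX nat | IY nat

definition rv_family ::
  "('a \<Rightarrow> nat) \<Rightarrow> ('a \<Rightarrow> nat) \<Rightarrow> (nat \<Rightarrow> 'a \<Rightarrow> real) \<Rightarrow> (nat \<Rightarrow> 'a \<Rightarrow> real)
    \<Rightarrow> rv_index \<Rightarrow> 'a \<Rightarrow> real" where
  "rv_family V1 V2 X Y i = (case i of IV1 \<Rightarrow> (\<lambda>\<omega>. real (V1 \<omega>)) | IV2 \<Rightarrow> (\<lambda>\<omega>. real (V2 \<omega>))
     | IX k \<Rightarrow> X k | IY k \<Rightarrow> Y k)"

definition rv_indices :: "rv_index set" where
  "rv_indices = {IV1, IV2} \<union> IX ` {1..} \<union> IY ` {1..}"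

end

theory Submission
  imports Defs "HOL-Analysis.Convex"
begin

lemma (in prob_space) cond_nn:
  assumes ind: "indep_var S A T B"
    and h: "h \<in> borel_measurable (S \<Otimes>\<^sub>M T)"
  shows "(\<integral>\<^sup>+\<omega>. h (A \<omega>, B \<omega>) \<partial>M) = (\<integral>\<^sup>+\<omega>'. (\<integral>\<^sup>+\<omega>. h (A \<omega>', B \<omega>) \<partial>M) \<partial>M)"
proof -
  have rvA: "A \<in> measurable M S" and rvB: "B \<in> measurable M T"
    using ind by (auto dest: indep_var_rv1 indep_var_rv2)
  have eq: "distr M S A \<Otimes>\<^sub>M distr M T B = distr M (S \<Otimes>\<^sub>M T) (\<lambda>x. (A x, B x))"
    using ind indep_var_distribution_eq by blast
  interpret SA: prob_space "distr M S A" by (rule prob_space_distr) (rule rvA)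
  interpret TB: prob_space "distr M T B" by (rule prob_space_distr) (rule rvB)
  interpret P: pair_sigma_finite "distr M S A" "distr M T B" ..
  have sets_eq: "sets (distr M S A \<Otimes>\<^sub>M distr M T B) = sets (S \<Otimes>\<^sub>M T)"
    by (intro sets_pair_measure_cong) simp_all
  have h': "h \<in> borel_measurable (distr M S A \<Otimes>\<^sub>M distr M T B)"
    using h measurable_cong_sets[OF sets_eq refl] by simp
  have AB: "(\<lambda>x. (A x, B x)) \<in> measurable M (S \<Otimes>\<^sub>M T)"
    using rvA rvB by (rule measurable_Pair)
  have "(\<integral>\<^sup>+\<omega>. h (A \<omega>, B \<omega>) \<partial>M) = (\<integral>\<^sup>+x. h x \<partial>distr M (S \<Otimes>\<^sub>M T) (\<lambda>x. (A x, B x)))"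
    using nn_integral_distr[OF AB] h by (simp cong: measurable_cong_sets)
  also have "\<dots> = (\<integral>\<^sup>+x. h x \<partial>(distr M S A \<Otimes>\<^sub>M distr M T B))"
    by (simp add: eq)
  also have "\<dots> = (\<integral>\<^sup>+ x. \<integral>\<^sup>+ y. h (x, y) \<partial>distr M T B \<partial>distr M S A)"
    by (rule TB.nn_integral_fst[symmetric]) (rule h')
  also have "\<dots> = (\<integral>\<^sup>+ \<omega>'. \<integral>\<^sup>+ y. h (A \<omega>', y) \<partial>distr M T B \<partial>M)"
  proof -
    have m: "(\<lambda>x. \<integral>\<^sup>+ y. h (x, y) \<partial>distr M T B) \<in> borel_measurable S"
    proof -
      have "(\<lambda>x. \<integral>\<^sup>+ y. h (x, y) \<partial>distr M T B) \<in> borel_measurable (distr M S A)"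
        using TB.borel_measurable_nn_integral[of "\<lambda>x y. h (x, y)" "distr M S A"] h' by simp
      then show ?thesis by (simp cong: measurable_cong_sets)
    qed
    show ?thesis using nn_integral_distr[OF rvA] m by (simp cong: measurable_cong_sets)
  qed
  also have "\<dots> = (\<integral>\<^sup>+\<omega>'. (\<integral>\<^sup>+\<omega>. h (A \<omega>', B \<omega>) \<partial>M) \<partial>M)"
  proof (intro nn_integral_cong)
    fix x assume "x \<in> space M"
    then have "A x \<in> space S" by (rule measurable_space[OF rvA])
    then have "(\<lambda>y. h (A x, y)) \<in> borel_measurable T"
      using measurable_comp[OF measurable_Pair1' h] by (simp add: comp_def)
    then show "(\<integral>\<^sup>+ y. h (A x, y) \<partial>distr M T B) = (\<integral>\<^sup>+\<omega>. h (A x, B \<omega>) \<partial>M)"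
      using nn_integral_distr[OF rvB] by (simp cong: measurable_cong_sets)
  qed
  finally show ?thesis .
qed


lemma meas_natfloor: "(\<lambda>x::real. nat \<lfloor>x\<rfloor>) \<in> borel \<rightarrow>\<^sub>M count_space UNIV"
  by measurable

locale A6 = prob_space M for M :: "'a measure" +
  fixes V1 V2 :: "'a \<Rightarrow> nat" and X Y :: "nat \<Rightarrow> 'a \<Rightarrow> real" and r :: real
  assumes V1_rv: "V1 \<in> measurable M (count_space UNIV)"
    and V2_rv: "V2 \<in> measurable M (count_space UNIV)"
    and X_rv: "\<And>k. k \<ge> 1 \<Longrightarrow> X k \<in> borel_measurable M"
    and Y_rv: "\<And>k. k \<ge> 1 \<Longrightarrow> Y k \<in> borel_measurable M"
    and X_nonneg: "\<And>k. k \<ge> 1 \<Longrightarrow> AE \<omega> in M. X k \<omega> \<ge> 0"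
    and Y_nonneg: "\<And>k. k \<ge> 1 \<Longrightarrow> AE \<omega> in M. Y k \<omega> \<ge> 0"
    and X_ident: "\<And>k. k \<ge> 1 \<Longrightarrow> distr M borel (X k) = distr M borel (X 1)"
    and Y_ident: "\<And>k. k \<ge> 1 \<Longrightarrow> distr M borel (Y k) = distr M borel (Y 1)"
    and indep: "indep_vars (\<lambda>_. borel) (rv_family V1 V2 X Y) rv_indices"
    and r: "1 < r" "r \<le> 2"
    and XY_mom: "integrable M (\<lambda>\<omega>. X 1 \<omega> powr r + Y 1 \<omega> powr r)"
    and V_mom: "integrable M (\<lambda>\<omega>. real (V1 \<omega>) powr r + real (V2 \<omega>) powr r)"
begin

abbreviation "Z \<equiv> rv_family V1 V2 X Y"

lemma indep_pair:
  assumes "a \<in> rv_indices" "b \<in> rv_indices" "a \<noteq> b"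
  shows "indep_var borel (Z a) borel (Z b)"
proof -
  have "indep_var (PiM {a} (\<lambda>_. borel)) (\<lambda>\<omega>. restrict (\<lambda>i. Z i \<omega>) {a})
                  (PiM {b} (\<lambda>_. borel)) (\<lambda>\<omega>. restrict (\<lambda>i. Z i \<omega>) {b})"
    using assms by (intro indep_var_restrict[OF indep]) auto
  then have "indep_var borel ((\<lambda>f. f a) \<circ> (\<lambda>\<omega>. restrict (\<lambda>i. Z i \<omega>) {a}))
                  borel ((\<lambda>f. f b) \<circ> (\<lambda>\<omega>. restrict (\<lambda>i. Z i \<omega>) {b}))"
    by (rule indep_var_compose) (auto intro: measurable_component_singleton)
  then show ?thesis by (simp add: comp_def)
qed

definition "BI = rv_indices - {IV1, IV2}"
definition "WW \<omega> = restrict (\<lambda>i. Z i \<omega>) BI"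

definition "VV \<omega> = restrict (\<lambda>i. Z i \<omega>) {IV1, IV2}"

lemma indep_VW: "indep_var (PiM {IV1, IV2} (\<lambda>_. borel)) VV (PiM BI (\<lambda>_. borel)) WW"
  unfolding VV_def WW_def
  by (intro indep_var_restrict[OF indep]) (auto simp: BI_def rv_indices_def)

lemma VV1: "nat \<lfloor>VV \<omega> IV1\<rfloor> = V1 \<omega>" and VV2: "nat \<lfloor>VV \<omega> IV2\<rfloor> = V2 \<omega>"
  by (simp_all add: VV_def rv_family_def)

lemma VV_nat: "(nat \<lfloor>VV \<omega> IV1\<rfloor>, nat \<lfloor>VV \<omega> IV2\<rfloor>) = (V1 \<omega>, V2 \<omega>)"
  by (simp add: VV_def rv_family_def)

lemma meas_pairnat: "(\<lambda>f::rv_index\<Rightarrow>real. (nat \<lfloor>f IV1\<rfloor>, nat \<lfloor>f IV2\<rfloor>)) \<in> Pi\<^sub>M {IV1, IV2} (\<lambda>_. borel) \<rightarrow>\<^sub>M count_space UNIV"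
proof -
  have 1: "(\<lambda>f. f IV1) \<in> Pi\<^sub>M {IV1, IV2} (\<lambda>_. borel) \<rightarrow>\<^sub>M (borel :: real measure)"
    by (rule measurable_component_singleton) auto
  have 2: "(\<lambda>f. f IV2) \<in> Pi\<^sub>M {IV1, IV2} (\<lambda>_. borel) \<rightarrow>\<^sub>M (borel :: real measure)"
    by (rule measurable_component_singleton) auto
  have "(\<lambda>f::rv_index\<Rightarrow>real. (nat \<lfloor>f IV1\<rfloor>, nat \<lfloor>f IV2\<rfloor>)) \<in> Pi\<^sub>M {IV1, IV2} (\<lambda>_. borel) \<rightarrow>\<^sub>M (count_space UNIV \<Otimes>\<^sub>M count_space UNIV)"
  proof (rule measurable_Pair)
    show "(\<lambda>f::rv_index\<Rightarrow>real. nat \<lfloor>f IV1\<rfloor>) \<in> Pi\<^sub>M {IV1, IV2} (\<lambda>_. borel) \<rightarrow>\<^sub>M count_space UNIV"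
      using measurable_comp[OF 1 meas_natfloor] by (simp add: comp_def)
    show "(\<lambda>f::rv_index\<Rightarrow>real. nat \<lfloor>f IV2\<rfloor>) \<in> Pi\<^sub>M {IV1, IV2} (\<lambda>_. borel) \<rightarrow>\<^sub>M count_space UNIV"
      using measurable_comp[OF 2 meas_natfloor] by (simp add: comp_def)
  qed
  then show ?thesis by (simp add: pair_measure_countable)
qed

lemma cond_H:
  assumes H: "\<And>n m. H n m \<in> borel_measurable (PiM BI (\<lambda>_. borel))"
  shows "(\<integral>\<^sup>+\<omega>. H (V1 \<omega>) (V2 \<omega>) (WW \<omega>) \<partial>M) = (\<integral>\<^sup>+\<omega>'. (\<integral>\<^sup>+\<omega>. H (V1 \<omega>') (V2 \<omega>') (WW \<omega>) \<partial>M) \<partial>M)"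
proof -
  define h where "h x = H (nat \<lfloor>fst x IV1\<rfloor>) (nat \<lfloor>fst x IV2\<rfloor>) (snd x)" for x :: "(rv_index \<Rightarrow> real) \<times> (rv_index \<Rightarrow> real)"
  have "h \<in> borel_measurable (PiM {IV1, IV2} (\<lambda>_. borel) \<Otimes>\<^sub>M PiM BI (\<lambda>_. borel))"
  proof -
    have g: "(\<lambda>x::(rv_index\<Rightarrow>real)\<times>(rv_index\<Rightarrow>real). (nat \<lfloor>fst x IV1\<rfloor>, nat \<lfloor>fst x IV2\<rfloor>)) \<in> (PiM {IV1, IV2} (\<lambda>_. borel) \<Otimes>\<^sub>M PiM BI (\<lambda>_. borel)) \<rightarrow>\<^sub>M count_space UNIV"
    proof -
      have "fst \<in> (PiM {IV1, IV2} (\<lambda>_. borel) \<Otimes>\<^sub>M PiM BI (\<lambda>_. borel)) \<rightarrow>\<^sub>M PiM {IV1, IV2} (\<lambda>_. (borel::real measure))"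
        by simp
      from measurable_comp[OF this meas_pairnat] show ?thesis by (simp add: comp_def)
    qed
    have f: "(\<lambda>x::(rv_index\<Rightarrow>real)\<times>(rv_index\<Rightarrow>real). H (fst i) (snd i) (snd x)) \<in> borel_measurable (PiM {IV1, IV2} (\<lambda>_. borel) \<Otimes>\<^sub>M PiM BI (\<lambda>_. borel))" for i
      using measurable_comp[OF measurable_snd H] by (simp add: comp_def)
    show ?thesis
      using measurable_compose_countable'[where f="\<lambda>i x. H (fst i) (snd i) (snd x)", OF f g]
      by (simp add: h_def[abs_def])
  qed
  from cond_nn[OF indep_VW this] show ?thesis
    by (simp add: h_def VV1 VV2)
qed

definition "SS n m \<omega> = (\<Sum>i=1..n. X i \<omega>) + (\<Sum>j=1..m. Y j \<omega>)"

lemma cond_S: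
  assumes F: "F \<in> borel_measurable (borel :: real measure)"
  shows "(\<integral>\<^sup>+\<omega>. ennreal (F (SS (V1 \<omega>) (V2 \<omega>) \<omega>)) \<partial>M) =
    (\<integral>\<^sup>+\<omega>'. (\<integral>\<^sup>+\<omega>. ennreal (F (SS (V1 \<omega>') (V2 \<omega>') \<omega>)) \<partial>M) \<partial>M)"
proof -
  define H where "H n m w = ennreal (F ((\<Sum>i=1..n. w (IX i)) + (\<Sum>j=1..m. w (IY j))))" for n m and w :: "rv_index \<Rightarrow> real"
  have HW: "H n m (WW \<omega>) = ennreal (F (SS n m \<omega>))" for n m \<omega>
    unfolding H_def SS_def WW_def
    by (simp add: BI_def rv_indices_def rv_family_def)
  have comp: "(\<lambda>w. w i) \<in> borel_measurable (PiM BI (\<lambda>_. borel))" if "i \<in> BI" for i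
    using that by (rule measurable_component_singleton)
  have "H n m \<in> borel_measurable (PiM BI (\<lambda>_. borel))" for n m
  proof -
    have "(\<lambda>w::rv_index\<Rightarrow>real. (\<Sum>i=1..n. w (IX i)) + (\<Sum>j=1..m. w (IY j))) \<in> borel_measurable (PiM BI (\<lambda>_. borel))"
    proof (rule borel_measurable_add)
      show "(\<lambda>w::rv_index\<Rightarrow>real. \<Sum>i=1..n. w (IX i)) \<in> borel_measurable (PiM BI (\<lambda>_. borel))"
        by (rule borel_measurable_sum, rule comp) (auto simp: BI_def rv_indices_def)
      show "(\<lambda>w::rv_index\<Rightarrow>real. \<Sum>i=1..m. w (IY i)) \<in> borel_measurable (PiM BI (\<lambda>_. borel))"
        by (rule borel_measurable_sum, rule comp) (auto simp: BI_def rv_indices_def)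
    qed
    from measurable_comp[OF this F] show ?thesis
      unfolding H_def[abs_def] comp_def by measurable
  qed
  from cond_H[OF this] show ?thesis by (simp add: HW)
qed

end

lemma sq_sum_split:
  fixes f :: "'i \<Rightarrow> real"
  assumes "finite K"
  shows "(\<Sum>i\<in>K. f i)^2 = (\<Sum>i\<in>K. (f i)^2) + (\<Sum>i\<in>K. \<Sum>j\<in>K-{i}. f i * f j)"
proof -
  have "(\<Sum>i\<in>K. f i)^2 = (\<Sum>i\<in>K. \<Sum>j\<in>K. f i * f j)"
    by (simp add: power2_eq_square sum_product)
  also have "\<dots> = (\<Sum>i\<in>K. (f i)^2 + (\<Sum>j\<in>K-{i}. f i * f j))"
    using assms by (intro sum.cong refl) (simp add: sum.remove power2_eq_square)
  also have "\<dots> = (\<Sum>i\<in>K. (f i)^2) + (\<Sum>i\<in>K. \<Sum>j\<in>K-{i}. f i * f j)"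
    by (simp add: sum.distrib)
  finally show ?thesis .
qed

lemma powr_le_self_aux: "0 \<le> t \<Longrightarrow> t \<le> 1 \<Longrightarrow> 0 < s \<Longrightarrow> s \<le> 1 \<Longrightarrow> t \<le> t powr (s::real)"
  by (metis powr_mono' powr_one)

lemma powr_subadd:
  fixes x y s :: real
  assumes "0 \<le> x" "0 \<le> y" "0 < s" "s \<le> 1"
  shows "(x + y) powr s \<le> x powr s + y powr s"
proof (cases "x + y = 0")
  case True then show ?thesis using assms by simp
next
  case False
  then have xy: "x + y > 0" using assms by simp
  define t where "t = x / (x + y)"
  have t: "0 \<le> t" "t \<le> 1" using assms xy by (auto simp: t_def field_simps)
  have x: "x = t * (x + y)" and y: "y = (1 - t) * (x + y)" using xy by (auto simp: t_def field_simps)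
  have "x powr s + y powr s = (t powr s + (1 - t) powr s) * (x + y) powr s"
  proof -
    have 1: "x powr s = t powr s * (x + y) powr s"
      using arg_cong[of _ _ "\<lambda>z. z powr s", OF x] t xy by (simp add: powr_mult)
    have 2: "y powr s = (1 - t) powr s * (x + y) powr s"
      using arg_cong[of _ _ "\<lambda>z. z powr s", OF y] t xy by (simp add: powr_mult)
    show ?thesis by (simp add: 1 2 algebra_simps)
  qed
  also have "\<dots> \<ge> (t + (1 - t)) * (x + y) powr s"
    using powr_le_self_aux[of t s] powr_le_self_aux[of "1 - t" s] t assms
    by (intro mult_right_mono) auto
  finally show ?thesis by simp
qed

lemma powr_subadd_sum:
  fixes f :: "'i \<Rightarrow> real"
  assumes "finite K" "\<And>i. i \<in> K \<Longrightarrow> 0 \<le> f i" "0 < s" "s \<le> 1"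
  shows "(\<Sum>i\<in>K. f i) powr s \<le> (\<Sum>i\<in>K. f i powr s)"
  using assms
proof (induction K rule: finite_induct)
  case empty then show ?case by simp
next
  case (insert a K)
  have "(\<Sum>i\<in>insert a K. f i) powr s = (f a + (\<Sum>i\<in>K. f i)) powr s"
    using insert by simp
  also have "\<dots> \<le> f a powr s + (\<Sum>i\<in>K. f i) powr s"
    using insert by (intro powr_subadd) (auto intro: sum_nonneg)
  also have "\<dots> \<le> f a powr s + (\<Sum>i\<in>K. f i powr s)"
    using insert by simp
  finally show ?case using insert by simp
qed

lemma powr_tangent:
  fixes t a s :: real
  assumes "0 \<le> t" "0 < a" "0 < s" "s \<le> 1"
  shows "t powr s \<le> (1 - s) * a powr s + s * a powr (s - 1) * t"
proof (cases "t = 0")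
  case True then show ?thesis using assms by simp
next
  case False
  then have tp: "t > 0" using assms by simp
  have Y: "t powr s * a powr (1 - s) \<le> s * t + (1 - s) * a"
    using Youngs_inequality_0[of s "1 - s" t a] assms tp by simp
  have "t powr s = (t powr s * a powr (1 - s)) * a powr (s - 1)"
    using assms by (simp add: mult.assoc powr_add[symmetric])
  also have "\<dots> \<le> (s * t + (1 - s) * a) * a powr (s - 1)"
    using Y by (intro mult_right_mono) auto
  also have "\<dots> = (1 - s) * (a * a powr (s - 1)) + s * a powr (s - 1) * t"
    by (simp add: algebra_simps)
  also have "a * a powr (s - 1) = a powr s"
    using assms powr_add[of a 1 "s - 1"] by simp
  finally show ?thesis .
qed

lemma powr_le_1_plus:
  fixes x s :: real
  assumes "0 \<le> x" "0 < s" "s \<le> 1"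
  shows "x powr s \<le> 1 + x"
  by (smt (verit, ccfv_SIG) assms(1,2,3) powr01_less_one powr_mono powr_nonneg_iff powr_one)

lemma le_1_plus_powr:
  fixes x r :: real
  assumes "0 \<le> x" "1 \<le> r"
  shows "x \<le> 1 + x powr r"
  by (smt (verit, del_insts) assms log_powr_cancel one_le_log_cancel_iff powr_def powr_nonneg_iff)


lemma (in prob_space) cross_int:
  fixes U1 :: "'i \<Rightarrow> 'a \<Rightarrow> real" and U2 :: "'j \<Rightarrow> 'a \<Rightarrow> real"
  assumes "finite K1" "finite K2"
    and ind: "\<And>i j. i \<in> K1 \<Longrightarrow> j \<in> K2 \<Longrightarrow> indep_var borel (U1 i) borel (U2 j)"
    and i1: "\<And>i. i \<in> K1 \<Longrightarrow> integrable M (U1 i)" and i2: "\<And>j. j \<in> K2 \<Longrightarrow> integrable M (U2 j)"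
  shows "integrable M (\<lambda>\<omega>. (\<Sum>i\<in>K1. U1 i \<omega>) * (\<Sum>j\<in>K2. U2 j \<omega>))"
    and "(\<integral>\<omega>. (\<Sum>i\<in>K1. U1 i \<omega>) * (\<Sum>j\<in>K2. U2 j \<omega>) \<partial>M) = (\<Sum>i\<in>K1. \<integral>\<omega>. U1 i \<omega> \<partial>M) * (\<Sum>j\<in>K2. \<integral>\<omega>. U2 j \<omega> \<partial>M)"
proof -
  have eq: "(\<lambda>\<omega>. (\<Sum>i\<in>K1. U1 i \<omega>) * (\<Sum>j\<in>K2. U2 j \<omega>)) = (\<lambda>\<omega>. \<Sum>i\<in>K1. \<Sum>j\<in>K2. U1 i \<omega> * U2 j \<omega>)"
    by (simp add: sum_product)
  have ij: "integrable M (\<lambda>\<omega>. U1 i \<omega> * U2 j \<omega>)" if "i \<in> K1" "j \<in> K2" for i j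
    using indep_var_integrable[OF ind i1 i2] that by auto
  show "integrable M (\<lambda>\<omega>. (\<Sum>i\<in>K1. U1 i \<omega>) * (\<Sum>j\<in>K2. U2 j \<omega>))"
    unfolding eq by (intro Bochner_Integration.integrable_sum) (auto intro: ij)
  have "(\<integral>\<omega>. (\<Sum>i\<in>K1. \<Sum>j\<in>K2. U1 i \<omega> * U2 j \<omega>) \<partial>M) = (\<Sum>i\<in>K1. \<Sum>j\<in>K2. \<integral>\<omega>. U1 i \<omega> * U2 j \<omega> \<partial>M)"
    using ij by (simp add: Bochner_Integration.integral_sum)
  also have "\<dots> = (\<Sum>i\<in>K1. \<Sum>j\<in>K2. (\<integral>\<omega>. U1 i \<omega> \<partial>M) * (\<integral>\<omega>. U2 j \<omega> \<partial>M))"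
    by (intro sum.cong refl indep_var_lebesgue_integral ind i1 i2) auto
  finally show "(\<integral>\<omega>. (\<Sum>i\<in>K1. U1 i \<omega>) * (\<Sum>j\<in>K2. U2 j \<omega>) \<partial>M) = (\<Sum>i\<in>K1. \<integral>\<omega>. U1 i \<omega> \<partial>M) * (\<Sum>j\<in>K2. \<integral>\<omega>. U2 j \<omega> \<partial>M)"
    unfolding eq by (simp add: sum_product)
qed

lemma (in prob_space) offdiag_int:
  fixes U :: "'i \<Rightarrow> 'a \<Rightarrow> real"
  assumes "finite K"
    and ind: "\<And>i j. i \<in> K \<Longrightarrow> j \<in> K \<Longrightarrow> i \<noteq> j \<Longrightarrow> indep_var borel (U i) borel (U j)"
    and i1: "\<And>i. i \<in> K \<Longrightarrow> integrable M (U i)"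
  shows "integrable M (\<lambda>\<omega>. \<Sum>i\<in>K. \<Sum>j\<in>K-{i}. U i \<omega> * U j \<omega>)"
    and "(\<integral>\<omega>. (\<Sum>i\<in>K. \<Sum>j\<in>K-{i}. U i \<omega> * U j \<omega>) \<partial>M) = (\<Sum>i\<in>K. \<Sum>j\<in>K-{i}. (\<integral>\<omega>. U i \<omega> \<partial>M) * (\<integral>\<omega>. U j \<omega> \<partial>M))"
proof -
  have ij: "integrable M (\<lambda>\<omega>. U i \<omega> * U j \<omega>)" if "i \<in> K" "j \<in> K-{i}" for i j
    using indep_var_integrable[OF ind i1 i1] that by auto
  show "integrable M (\<lambda>\<omega>. \<Sum>i\<in>K. \<Sum>j\<in>K-{i}. U i \<omega> * U j \<omega>)"
    by (intro Bochner_Integration.integrable_sum) (auto intro: ij)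
  have "(\<integral>\<omega>. (\<Sum>i\<in>K. \<Sum>j\<in>K-{i}. U i \<omega> * U j \<omega>) \<partial>M) = (\<Sum>i\<in>K. \<Sum>j\<in>K-{i}. \<integral>\<omega>. U i \<omega> * U j \<omega> \<partial>M)"
  proof -
    have "(\<integral>\<omega>. (\<Sum>i\<in>K. \<Sum>j\<in>K-{i}. U i \<omega> * U j \<omega>) \<partial>M) = (\<Sum>i\<in>K. \<integral>\<omega>. (\<Sum>j\<in>K-{i}. U i \<omega> * U j \<omega>) \<partial>M)"
      by (rule Bochner_Integration.integral_sum) (auto intro!: Bochner_Integration.integrable_sum ij)
    also have "\<dots> = (\<Sum>i\<in>K. \<Sum>j\<in>K-{i}. \<integral>\<omega>. U i \<omega> * U j \<omega> \<partial>M)"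
      by (intro sum.cong refl Bochner_Integration.integral_sum ij) auto
    finally show ?thesis .
  qed
  also have "\<dots> = (\<Sum>i\<in>K. \<Sum>j\<in>K-{i}. (\<integral>\<omega>. U i \<omega> \<partial>M) * (\<integral>\<omega>. U j \<omega> \<partial>M))"
    by (intro sum.cong refl indep_var_lebesgue_integral ind i1) auto
  finally show "(\<integral>\<omega>. (\<Sum>i\<in>K. \<Sum>j\<in>K-{i}. U i \<omega> * U j \<omega>) \<partial>M) = (\<Sum>i\<in>K. \<Sum>j\<in>K-{i}. (\<integral>\<omega>. U i \<omega> \<partial>M) * (\<integral>\<omega>. U j \<omega> \<partial>M))" .
qed

lemma (in prob_space) jensen_powr:
  fixes T :: "'a \<Rightarrow> real"
  assumes Tm: "T \<in> borel_measurable M" and T0: "AE \<omega> in M. 0 \<le> T \<omega>" and Ti: "integrable M T"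
    and s: "0 < s" "s \<le> 1"
  shows "integrable M (\<lambda>\<omega>. T \<omega> powr s)" (is ?I)
    and "(\<integral>\<omega>. T \<omega> powr s \<partial>M) \<le> (\<integral>\<omega>. T \<omega> \<partial>M) powr s" (is ?J)
proof -
  show I: ?I
  proof (rule Bochner_Integration.integrable_bound)
    show "integrable M (\<lambda>\<omega>. 1 + T \<omega>)" using Ti by simp
    show "(\<lambda>\<omega>. T \<omega> powr s) \<in> borel_measurable M" using Tm by measurable
    show "AE \<omega> in M. norm (T \<omega> powr s) \<le> norm (1 + T \<omega>)"
      using T0 by eventually_elim (use powr_le_1_plus[OF _ s] in auto)
  qed
  define a where "a = (\<integral>\<omega>. T \<omega> \<partial>M)"
  have a0: "0 \<le> a" unfolding a_def using T0 by (rule integral_nonneg_AE)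
  show ?J
  proof (cases "a = 0")
    case True
    then have "AE \<omega> in M. T \<omega> = 0"
      using integral_nonneg_eq_0_iff_AE[OF Ti T0] by (simp add: a_def)
    then have "AE \<omega> in M. T \<omega> powr s = 0" by eventually_elim simp
    then have "(\<integral>\<omega>. T \<omega> powr s \<partial>M) = (\<integral>\<omega>. 0 \<partial>M)"
      by (intro integral_cong_AE) (use Tm in auto)
    then show ?thesis using True by (simp add: a_def)
  next
    case False
    then have ap: "a > 0" using a0 by simp
    have "(\<integral>\<omega>. T \<omega> powr s \<partial>M) \<le> (\<integral>\<omega>. (1 - s) * a powr s + s * a powr (s - 1) * T \<omega> \<partial>M)"
    proof (rule integral_mono_AE[OF I])
      show "integrable M (\<lambda>\<omega>. (1 - s) * a powr s + s * a powr (s - 1) * T \<omega>)" using Ti by simp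
      show "AE \<omega> in M. T \<omega> powr s \<le> (1 - s) * a powr s + s * a powr (s - 1) * T \<omega>"
        using T0 by eventually_elim (use powr_tangent[OF _ ap s] in auto)
    qed
    also have "\<dots> = (1 - s) * a powr s + s * a powr (s - 1) * a"
      using Ti by (simp add: a_def prob_space)
    also have "s * a powr (s - 1) * a = s * a powr s"
      using ap powr_add[of a "s - 1" 1] by simp
    finally show ?thesis by (simp add: a_def algebra_simps)
  qed
qed


lemma powr_sq_half: "0 \<le> (x::real) \<Longrightarrow> x powr r = (x^2) powr (r/2)"
proof -
  assume x: "0 \<le> x"
  have e: "x^2 = x powr 2"
    using x by (cases "x = 0") (simp_all add: powr_realpow)
  have "(x^2) powr (r/2) = (x powr 2) powr (r/2)" by (simp only: e)
  also have "\<dots> = x powr r" by (simp add: powr_powr)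
  finally show ?thesis by simp
qed

context A6 begin

lemma X_transfer:
  fixes g :: "real \<Rightarrow> real"
  assumes k: "k \<ge> 1" and g: "g \<in> borel_measurable borel"
  shows "integrable M (\<lambda>\<omega>. g (X k \<omega>)) = integrable M (\<lambda>\<omega>. g (X 1 \<omega>))"
    and "(\<integral>\<omega>. g (X k \<omega>) \<partial>M) = (\<integral>\<omega>. g (X 1 \<omega>) \<partial>M)"
proof -
  have "integrable M (\<lambda>\<omega>. g (X k \<omega>)) = integrable (distr M borel (X k)) g"
    using integrable_distr_eq[OF X_rv[OF k] g] by simp
  also have "\<dots> = integrable (distr M borel (X 1)) g" using X_ident[OF k] by simp
  also have "\<dots> = integrable M (\<lambda>\<omega>. g (X 1 \<omega>))"
    using integrable_distr_eq[OF X_rv[of 1] g] by simp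
  finally show "integrable M (\<lambda>\<omega>. g (X k \<omega>)) = integrable M (\<lambda>\<omega>. g (X 1 \<omega>))" .
  have "(\<integral>\<omega>. g (X k \<omega>) \<partial>M) = integral\<^sup>L (distr M borel (X k)) g"
    using integral_distr[OF X_rv[OF k] g] by simp
  also have "\<dots> = integral\<^sup>L (distr M borel (X 1)) g" using X_ident[OF k] by simp
  also have "\<dots> = (\<integral>\<omega>. g (X 1 \<omega>) \<partial>M)"
    using integral_distr[OF X_rv[of 1] g] by simp
  finally show "(\<integral>\<omega>. g (X k \<omega>) \<partial>M) = (\<integral>\<omega>. g (X 1 \<omega>) \<partial>M)" .
qed

lemma Y_transfer:
  fixes g :: "real \<Rightarrow> real"
  assumes k: "k \<ge> 1" and g: "g \<in> borel_measurable borel"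
  shows "integrable M (\<lambda>\<omega>. g (Y k \<omega>)) = integrable M (\<lambda>\<omega>. g (Y 1 \<omega>))"
    and "(\<integral>\<omega>. g (Y k \<omega>) \<partial>M) = (\<integral>\<omega>. g (Y 1 \<omega>) \<partial>M)"
proof -
  have "integrable M (\<lambda>\<omega>. g (Y k \<omega>)) = integrable (distr M borel (Y k)) g"
    using integrable_distr_eq[OF Y_rv[OF k] g] by simp
  also have "\<dots> = integrable (distr M borel (Y 1)) g" using Y_ident[OF k] by simp
  also have "\<dots> = integrable M (\<lambda>\<omega>. g (Y 1 \<omega>))"
    using integrable_distr_eq[OF Y_rv[of 1] g] by simp
  finally show "integrable M (\<lambda>\<omega>. g (Y k \<omega>)) = integrable M (\<lambda>\<omega>. g (Y 1 \<omega>))" .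
  have "(\<integral>\<omega>. g (Y k \<omega>) \<partial>M) = integral\<^sup>L (distr M borel (Y k)) g"
    using integral_distr[OF Y_rv[OF k] g] by simp
  also have "\<dots> = integral\<^sup>L (distr M borel (Y 1)) g" using Y_ident[OF k] by simp
  also have "\<dots> = (\<integral>\<omega>. g (Y 1 \<omega>) \<partial>M)"
    using integral_distr[OF Y_rv[of 1] g] by simp
  finally show "(\<integral>\<omega>. g (Y k \<omega>) \<partial>M) = (\<integral>\<omega>. g (Y 1 \<omega>) \<partial>M)" .
qed

lemma X1r_int: "integrable M (\<lambda>\<omega>. X 1 \<omega> powr r)"
  by (rule Bochner_Integration.integrable_bound[OF XY_mom]) (use X_rv[of 1] in auto)

lemma Y1r_int: "integrable M (\<lambda>\<omega>. Y 1 \<omega> powr r)"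
  by (rule Bochner_Integration.integrable_bound[OF XY_mom]) (use Y_rv[of 1] in auto)

lemma V1r_int: "integrable M (\<lambda>\<omega>. real (V1 \<omega>) powr r)"
  by (rule Bochner_Integration.integrable_bound[OF V_mom]) (use V1_rv in auto)

lemma V2r_int: "integrable M (\<lambda>\<omega>. real (V2 \<omega>) powr r)"
  by (rule Bochner_Integration.integrable_bound[OF V_mom]) (use V2_rv in auto)

lemma X1_int: "integrable M (X 1)"
proof (rule Bochner_Integration.integrable_bound)
  show "integrable M (\<lambda>\<omega>. 1 + X 1 \<omega> powr r)" using X1r_int by simp
  show "X 1 \<in> borel_measurable M" using X_rv[of 1] by simp
  show "AE \<omega> in M. norm (X 1 \<omega>) \<le> norm (1 + X 1 \<omega> powr r)"
    using X_nonneg[OF order_refl] by eventually_elim (use le_1_plus_powr[of _ r] r in auto)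
qed

lemma Y1_int: "integrable M (Y 1)"
proof (rule Bochner_Integration.integrable_bound)
  show "integrable M (\<lambda>\<omega>. 1 + Y 1 \<omega> powr r)" using Y1r_int by simp
  show "Y 1 \<in> borel_measurable M" using Y_rv[of 1] by simp
  show "AE \<omega> in M. norm (Y 1 \<omega>) \<le> norm (1 + Y 1 \<omega> powr r)"
    using Y_nonneg[OF order_refl] by eventually_elim (use le_1_plus_powr[of _ r] r in auto)
qed

lemma V1_int: "integrable M (\<lambda>\<omega>. real (V1 \<omega>))"
proof (rule Bochner_Integration.integrable_bound)
  show "integrable M (\<lambda>\<omega>. 1 + real (V1 \<omega>) powr r)" using V1r_int by simp
  show "(\<lambda>\<omega>. real (V1 \<omega>)) \<in> borel_measurable M" using V1_rv by measurable
  show "AE \<omega> in M. norm (real (V1 \<omega>)) \<le> norm (1 + real (V1 \<omega>) powr r)"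
    using le_1_plus_powr[of _ r] r by auto
qed

lemma V2_int: "integrable M (\<lambda>\<omega>. real (V2 \<omega>))"
proof (rule Bochner_Integration.integrable_bound)
  show "integrable M (\<lambda>\<omega>. 1 + real (V2 \<omega>) powr r)" using V2r_int by simp
  show "(\<lambda>\<omega>. real (V2 \<omega>)) \<in> borel_measurable M" using V2_rv by measurable
  show "AE \<omega> in M. norm (real (V2 \<omega>)) \<le> norm (1 + real (V2 \<omega>) powr r)"
    using le_1_plus_powr[of _ r] r by auto
qed

lemma Xk_int: "k \<ge> 1 \<Longrightarrow> integrable M (X k)" and Xk_mean: "k \<ge> 1 \<Longrightarrow> (\<integral>\<omega>. X k \<omega> \<partial>M) = (\<integral>\<omega>. X 1 \<omega> \<partial>M)"
  using X_transfer[of k "\<lambda>x. x"] X1_int by auto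

lemma Yk_int: "k \<ge> 1 \<Longrightarrow> integrable M (Y k)" and Yk_mean: "k \<ge> 1 \<Longrightarrow> (\<integral>\<omega>. Y k \<omega> \<partial>M) = (\<integral>\<omega>. Y 1 \<omega> \<partial>M)"
  using Y_transfer[of k "\<lambda>x. x"] Y1_int by auto

lemma Xkr_int: "k \<ge> 1 \<Longrightarrow> integrable M (\<lambda>\<omega>. X k \<omega> powr r)" and Xkr_mean: "k \<ge> 1 \<Longrightarrow> (\<integral>\<omega>. X k \<omega> powr r \<partial>M) = (\<integral>\<omega>. X 1 \<omega> powr r \<partial>M)"
  using X_transfer[of k "\<lambda>x. x powr r"] X1r_int by auto

lemma Ykr_int: "k \<ge> 1 \<Longrightarrow> integrable M (\<lambda>\<omega>. Y k \<omega> powr r)" and Ykr_mean: "k \<ge> 1 \<Longrightarrow> (\<integral>\<omega>. Y k \<omega> powr r \<partial>M) = (\<integral>\<omega>. Y 1 \<omega> powr r \<partial>M)"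
  using Y_transfer[of k "\<lambda>x. x powr r"] Y1r_int by auto

lemma indep_XX: "i \<ge> 1 \<Longrightarrow> j \<ge> 1 \<Longrightarrow> i \<noteq> j \<Longrightarrow> indep_var borel (X i) borel (X j)"
  using indep_pair[of "IX i" "IX j"] by (simp add: rv_indices_def rv_family_def)

lemma indep_YY: "i \<ge> 1 \<Longrightarrow> j \<ge> 1 \<Longrightarrow> i \<noteq> j \<Longrightarrow> indep_var borel (Y i) borel (Y j)"
  using indep_pair[of "IY i" "IY j"] by (simp add: rv_indices_def rv_family_def)

lemma indep_XY: "i \<ge> 1 \<Longrightarrow> j \<ge> 1 \<Longrightarrow> indep_var borel (X i) borel (Y j)"
  using indep_pair[of "IX i" "IY j"] by (simp add: rv_indices_def rv_family_def)

lemma indep_V: "indep_var borel (\<lambda>\<omega>. real (V1 \<omega>)) borel (\<lambda>\<omega>. real (V2 \<omega>))"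
  using indep_pair[of "IV1" "IV2"] by (simp add: rv_indices_def rv_family_def)

lemma AE_pos: "AE \<omega> in M. \<forall>k. 1 \<le> k \<longrightarrow> 0 \<le> X k \<omega> \<and> 0 \<le> Y k \<omega>"
proof -
  have "AE \<omega> in M. 1 \<le> k \<longrightarrow> 0 \<le> X k \<omega> \<and> 0 \<le> Y k \<omega>" for k
  proof (cases "1 \<le> k")
    case True
    with X_nonneg[OF True] Y_nonneg[OF True] show ?thesis by eventually_elim auto
  qed simp
  then show ?thesis by (simp add: AE_all_countable)
qed

lemma SS_meas: "(\<lambda>\<omega>. SS n m \<omega>) \<in> borel_measurable M"
  unfolding SS_def
  by (intro borel_measurable_add borel_measurable_sum) (auto intro: X_rv Y_rv)

end

context A6 begin

abbreviation "mX \<equiv> (\<integral>\<omega>. X 1 \<omega> \<partial>M)"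
abbreviation "mY \<equiv> (\<integral>\<omega>. Y 1 \<omega> \<partial>M)"

lemma offdiag_const:
  "(\<Sum>i\<in>{1..n::nat}. \<Sum>j\<in>{1..n}-{i}. c * (c::real)) = (real n * c)^2 - real n * c^2"
  using sq_sum_split[of "{1..n}" "\<lambda>_. c"] by simp

lemma SS_sq_split:
  "(SS n m \<omega>)^2 = (\<Sum>i=1..n. (X i \<omega>)^2) + (\<Sum>i\<in>{1..n}. \<Sum>j\<in>{1..n}-{i}. X i \<omega> * X j \<omega>)
     + (\<Sum>i=1..m. (Y i \<omega>)^2) + (\<Sum>i\<in>{1..m}. \<Sum>j\<in>{1..m}-{i}. Y i \<omega> * Y j \<omega>)
     + 2 * ((\<Sum>i=1..n. X i \<omega>) * (\<Sum>j=1..m. Y j \<omega>))"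
  unfolding SS_def power2_sum sq_sum_split[where f="\<lambda>i. X i \<omega>", OF finite_atLeastAtMost]
    sq_sum_split[where f="\<lambda>i. Y i \<omega>", OF finite_atLeastAtMost] by simp

lemma OX_int: "integrable M (\<lambda>\<omega>. \<Sum>i\<in>{1..n}. \<Sum>j\<in>{1..n}-{i}. X i \<omega> * X j \<omega>)"
  and OX_mean: "(\<integral>\<omega>. (\<Sum>i\<in>{1..n}. \<Sum>j\<in>{1..n}-{i}. X i \<omega> * X j \<omega>) \<partial>M) = (real n * mX)^2 - real n * mX^2"
proof -
  have ind: "\<And>i j. i \<in> {1..n} \<Longrightarrow> j \<in> {1..n} \<Longrightarrow> i \<noteq> j \<Longrightarrow> indep_var borel (X i) borel (X j)"
    by (intro indep_XX) auto
  have int: "\<And>i. i \<in> {1..n} \<Longrightarrow> integrable M (X i)" by (intro Xk_int) auto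
  show "integrable M (\<lambda>\<omega>. \<Sum>i\<in>{1..n}. \<Sum>j\<in>{1..n}-{i}. X i \<omega> * X j \<omega>)"
    by (rule offdiag_int(1)[OF _ ind int]) auto
  have "(\<integral>\<omega>. (\<Sum>i\<in>{1..n}. \<Sum>j\<in>{1..n}-{i}. X i \<omega> * X j \<omega>) \<partial>M)
      = (\<Sum>i\<in>{1..n}. \<Sum>j\<in>{1..n}-{i}. (\<integral>\<omega>. X i \<omega> \<partial>M) * (\<integral>\<omega>. X j \<omega> \<partial>M))"
    by (rule offdiag_int(2)[OF _ ind int]) auto
  also have "\<dots> = (\<Sum>i\<in>{1..n}. \<Sum>j\<in>{1..n}-{i}. mX * mX)"
    by (intro sum.cong refl arg_cong2[where f="(*)"] Xk_mean) auto
  finally show "(\<integral>\<omega>. (\<Sum>i\<in>{1..n}. \<Sum>j\<in>{1..n}-{i}. X i \<omega> * X j \<omega>) \<partial>M) = (real n * mX)^2 - real n * mX^2"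
    by (simp add: power2_eq_square algebra_simps)
qed

lemma OY_int: "integrable M (\<lambda>\<omega>. \<Sum>i\<in>{1..n}. \<Sum>j\<in>{1..n}-{i}. Y i \<omega> * Y j \<omega>)"
  and OY_mean: "(\<integral>\<omega>. (\<Sum>i\<in>{1..n}. \<Sum>j\<in>{1..n}-{i}. Y i \<omega> * Y j \<omega>) \<partial>M) = (real n * mY)^2 - real n * mY^2"
proof -
  have ind: "\<And>i j. i \<in> {1..n} \<Longrightarrow> j \<in> {1..n} \<Longrightarrow> i \<noteq> j \<Longrightarrow> indep_var borel (Y i) borel (Y j)"
    by (intro indep_YY) auto
  have int: "\<And>i. i \<in> {1..n} \<Longrightarrow> integrable M (Y i)" by (intro Yk_int) auto
  show "integrable M (\<lambda>\<omega>. \<Sum>i\<in>{1..n}. \<Sum>j\<in>{1..n}-{i}. Y i \<omega> * Y j \<omega>)"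
    by (rule offdiag_int(1)[OF _ ind int]) auto
  have "(\<integral>\<omega>. (\<Sum>i\<in>{1..n}. \<Sum>j\<in>{1..n}-{i}. Y i \<omega> * Y j \<omega>) \<partial>M)
      = (\<Sum>i\<in>{1..n}. \<Sum>j\<in>{1..n}-{i}. (\<integral>\<omega>. Y i \<omega> \<partial>M) * (\<integral>\<omega>. Y j \<omega> \<partial>M))"
    by (rule offdiag_int(2)[OF _ ind int]) auto
  also have "\<dots> = (\<Sum>i\<in>{1..n}. \<Sum>j\<in>{1..n}-{i}. mY * mY)"
    by (intro sum.cong refl arg_cong2[where f="(*)"] Yk_mean) auto
  finally show "(\<integral>\<omega>. (\<Sum>i\<in>{1..n}. \<Sum>j\<in>{1..n}-{i}. Y i \<omega> * Y j \<omega>) \<partial>M) = (real n * mY)^2 - real n * mY^2"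
    by (simp add: power2_eq_square algebra_simps)
qed

lemma AB_int: "integrable M (\<lambda>\<omega>. (\<Sum>i=1..n. X i \<omega>) * (\<Sum>j=1..m. Y j \<omega>))"
  and AB_mean: "(\<integral>\<omega>. (\<Sum>i=1..n. X i \<omega>) * (\<Sum>j=1..m. Y j \<omega>) \<partial>M) = (real n * mX) * (real m * mY)"
proof -
  have ind: "\<And>i j. i \<in> {1..n} \<Longrightarrow> j \<in> {1..m} \<Longrightarrow> indep_var borel (X i) borel (Y j)"
    by (intro indep_XY) auto
  have i1: "\<And>i. i \<in> {1..n} \<Longrightarrow> integrable M (X i)" by (intro Xk_int) auto
  have i2: "\<And>i. i \<in> {1..m} \<Longrightarrow> integrable M (Y i)" by (intro Yk_int) auto
  show "integrable M (\<lambda>\<omega>. (\<Sum>i=1..n. X i \<omega>) * (\<Sum>j=1..m. Y j \<omega>))"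
    by (rule cross_int(1)[OF _ _ ind i1 i2]) auto
  have "(\<integral>\<omega>. (\<Sum>i=1..n. X i \<omega>) * (\<Sum>j=1..m. Y j \<omega>) \<partial>M) = (\<Sum>i=1..n. \<integral>\<omega>. X i \<omega> \<partial>M) * (\<Sum>j=1..m. \<integral>\<omega>. Y j \<omega> \<partial>M)"
    by (rule cross_int(2)[OF _ _ ind i1 i2]) auto
  also have "\<dots> = (\<Sum>i=1..n. mX) * (\<Sum>j=1..m. mY)"
    by (intro arg_cong2[where f="(*)"] sum.cong refl Xk_mean Yk_mean) auto
  finally show "(\<integral>\<omega>. (\<Sum>i=1..n. X i \<omega>) * (\<Sum>j=1..m. Y j \<omega>) \<partial>M) = (real n * mX) * (real m * mY)"
    by simp
qed

end

lemma subadd5: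
  fixes a b c d e s :: real
  assumes "0 \<le> a" "0 \<le> b" "0 \<le> c" "0 \<le> d" "0 \<le> e" "0 < s" "s \<le> 1"
  shows "(a + b + c + d + e) powr s \<le> a powr s + b powr s + c powr s + d powr s + e powr s"
proof -
  have "(a + b + c + d + e) powr s \<le> (a + b + c + d) powr s + e powr s"
    using assms by (intro powr_subadd) auto
  moreover have "(a + b + c + d) powr s \<le> (a + b + c) powr s + d powr s"
    using assms by (intro powr_subadd) auto
  moreover have "(a + b + c) powr s \<le> (a + b) powr s + c powr s"
    using assms by (intro powr_subadd) auto
  moreover have "(a + b) powr s \<le> a powr s + b powr s"
    using assms by (intro powr_subadd) auto
  ultimately show ?thesis by linarith
qed

lemma (in prob_space) int5:
  fixes a b c d e :: "'a \<Rightarrow> real"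
  assumes "integrable M a" "integrable M b" "integrable M c" "integrable M d" "integrable M e"
  shows "integrable M (\<lambda>\<omega>. a \<omega> + b \<omega> + c \<omega> + d \<omega> + e \<omega>)"
    and "(\<integral>\<omega>. a \<omega> + b \<omega> + c \<omega> + d \<omega> + e \<omega> \<partial>M) = integral\<^sup>L M a + integral\<^sup>L M b + integral\<^sup>L M c + integral\<^sup>L M d + integral\<^sup>L M e"
  using assms by (simp_all add: Bochner_Integration.integral_add)

context A6 begin

lemma mX_nonneg: "0 \<le> mX" using X_nonneg[OF order_refl] by (rule integral_nonneg_AE)
lemma mY_nonneg: "0 \<le> mY" using Y_nonneg[OF order_refl] by (rule integral_nonneg_AE)

lemma X1sq_int: assumes "r = 2" shows "integrable M (\<lambda>\<omega>. (X 1 \<omega>)^2)"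
proof -
  have "integrable M (\<lambda>\<omega>. X 1 \<omega> powr r)" by (rule X1r_int)
  moreover have "AE \<omega> in M. X 1 \<omega> powr r = (X 1 \<omega>)^2"
    using X_nonneg[OF order_refl]
  proof eventually_elim
    case (elim \<omega>) then show ?case using assms
      by (cases "X 1 \<omega> = 0") (simp_all add: powr_realpow)
  qed
  ultimately show ?thesis
    using X_rv[of 1] by (subst integrable_cong_AE[symmetric]) auto
qed

lemma Y1sq_int: assumes "r = 2" shows "integrable M (\<lambda>\<omega>. (Y 1 \<omega>)^2)"
proof -
  have "integrable M (\<lambda>\<omega>. Y 1 \<omega> powr r)" by (rule Y1r_int)
  moreover have "AE \<omega> in M. Y 1 \<omega> powr r = (Y 1 \<omega>)^2"
    using Y_nonneg[OF order_refl]
  proof eventually_elim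
    case (elim \<omega>) then show ?case using assms
      by (cases "Y 1 \<omega> = 0") (simp_all add: powr_realpow)
  qed
  ultimately show ?thesis
    using Y_rv[of 1] by (subst integrable_cong_AE[symmetric]) auto
qed

lemma Xksq: assumes "r = 2" "k \<ge> 1"
  shows "integrable M (\<lambda>\<omega>. (X k \<omega>)^2)" "(\<integral>\<omega>. (X k \<omega>)^2 \<partial>M) = (\<integral>\<omega>. (X 1 \<omega>)^2 \<partial>M)"
  using X_transfer[of k "\<lambda>x. x^2"] X1sq_int[OF assms(1)] assms(2) by auto

lemma Yksq: assumes "r = 2" "k \<ge> 1"
  shows "integrable M (\<lambda>\<omega>. (Y k \<omega>)^2)" "(\<integral>\<omega>. (Y k \<omega>)^2 \<partial>M) = (\<integral>\<omega>. (Y 1 \<omega>)^2 \<partial>M)"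
  using Y_transfer[of k "\<lambda>x. x^2"] Y1sq_int[OF assms(1)] assms(2) by auto

lemma R2:
  assumes r2: "r = 2"
  shows "integrable M (\<lambda>\<omega>. (SS n m \<omega>)^2)"
    and "(\<integral>\<omega>. (SS n m \<omega>)^2 \<partial>M) = real n * ((\<integral>\<omega>. (X 1 \<omega>)^2 \<partial>M) - mX^2)
          + real m * ((\<integral>\<omega>. (Y 1 \<omega>)^2 \<partial>M) - mY^2) + (real n * mX + real m * mY)^2"
proof -
  have eq: "(\<lambda>\<omega>. (SS n m \<omega>)^2) = (\<lambda>\<omega>. (\<Sum>i=1..n. (X i \<omega>)^2) + (\<Sum>i\<in>{1..n}. \<Sum>j\<in>{1..n}-{i}. X i \<omega> * X j \<omega>)
     + (\<Sum>i=1..m. (Y i \<omega>)^2) + (\<Sum>i\<in>{1..m}. \<Sum>j\<in>{1..m}-{i}. Y i \<omega> * Y j \<omega>)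
     + 2 * ((\<Sum>i=1..n. X i \<omega>) * (\<Sum>j=1..m. Y j \<omega>)))"
    by (rule ext) (rule SS_sq_split)
  have ia: "integrable M (\<lambda>\<omega>. \<Sum>i=1..n. (X i \<omega>)^2)"
    by (intro Bochner_Integration.integrable_sum) (auto intro: Xksq[OF r2])
  have ic: "integrable M (\<lambda>\<omega>. \<Sum>i=1..m. (Y i \<omega>)^2)"
    by (intro Bochner_Integration.integrable_sum) (auto intro: Yksq[OF r2])
  have ie: "integrable M (\<lambda>\<omega>. 2 * ((\<Sum>i=1..n. X i \<omega>) * (\<Sum>j=1..m. Y j \<omega>)))"
    using AB_int by simp
  note I5 = int5[OF ia OX_int ic OY_int ie]
  show "integrable M (\<lambda>\<omega>. (SS n m \<omega>)^2)" unfolding eq by (rule I5(1))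
  have ma: "(\<integral>\<omega>. (\<Sum>i=1..n. (X i \<omega>)^2) \<partial>M) = real n * (\<integral>\<omega>. (X 1 \<omega>)^2 \<partial>M)"
  proof -
    have "(\<integral>\<omega>. (\<Sum>i=1..n. (X i \<omega>)^2) \<partial>M) = (\<Sum>i=1..n. \<integral>\<omega>. (X i \<omega>)^2 \<partial>M)"
      by (rule Bochner_Integration.integral_sum) (auto intro: Xksq[OF r2])
    also have "\<dots> = (\<Sum>i=1..n. \<integral>\<omega>. (X 1 \<omega>)^2 \<partial>M)"
      by (intro sum.cong refl Xksq(2)[OF r2]) auto
    finally show ?thesis by simp
  qed
  have mc: "(\<integral>\<omega>. (\<Sum>i=1..m. (Y i \<omega>)^2) \<partial>M) = real m * (\<integral>\<omega>. (Y 1 \<omega>)^2 \<partial>M)"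
  proof -
    have "(\<integral>\<omega>. (\<Sum>i=1..m. (Y i \<omega>)^2) \<partial>M) = (\<Sum>i=1..m. \<integral>\<omega>. (Y i \<omega>)^2 \<partial>M)"
      by (rule Bochner_Integration.integral_sum) (auto intro: Yksq[OF r2])
    also have "\<dots> = (\<Sum>i=1..m. \<integral>\<omega>. (Y 1 \<omega>)^2 \<partial>M)"
      by (intro sum.cong refl Yksq(2)[OF r2]) auto
    finally show ?thesis by simp
  qed
  have me: "(\<integral>\<omega>. 2 * ((\<Sum>i=1..n. X i \<omega>) * (\<Sum>j=1..m. Y j \<omega>)) \<partial>M) = 2 * ((real n * mX) * (real m * mY))"
    using AB_mean by simp
  show "(\<integral>\<omega>. (SS n m \<omega>)^2 \<partial>M) = real n * ((\<integral>\<omega>. (X 1 \<omega>)^2 \<partial>M) - mX^2)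
          + real m * ((\<integral>\<omega>. (Y 1 \<omega>)^2 \<partial>M) - mY^2) + (real n * mX + real m * mY)^2"
    unfolding eq I5(2) ma mc me OX_mean OY_mean by (simp add: power2_eq_square algebra_simps)
qed

lemma Rr:
  assumes r2: "r < 2"
  shows "integrable M (\<lambda>\<omega>. SS n m \<omega> powr r)"
    and "(\<integral>\<omega>. SS n m \<omega> powr r \<partial>M) \<le> real n * (\<integral>\<omega>. X 1 \<omega> powr r \<partial>M)
          + real m * (\<integral>\<omega>. Y 1 \<omega> powr r \<partial>M)
          + (2 * real n * real m * mX * mY) powr (r / 2)
          + real n powr r * mX powr r + real m powr r * mY powr r"
proof -
  define s where "s = r / 2"
  have s: "0 < s" "s \<le> 1" using r by (auto simp: s_def)
  define A where "A \<omega> = (\<Sum>i=1..n. X i \<omega>)" for \<omega>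
  define B where "B \<omega> = (\<Sum>j=1..m. Y j \<omega>)" for \<omega>
  define OX where "OX \<omega> = (\<Sum>i\<in>{1..n}. \<Sum>j\<in>{1..n}-{i}. X i \<omega> * X j \<omega>)" for \<omega>
  define OY where "OY \<omega> = (\<Sum>i\<in>{1..m}. \<Sum>j\<in>{1..m}-{i}. Y i \<omega> * Y j \<omega>)" for \<omega>
  define Bd where "Bd \<omega> = (\<Sum>i=1..n. X i \<omega> powr r) + OX \<omega> powr s + (\<Sum>j=1..m. Y j \<omega> powr r)
      + OY \<omega> powr s + (2 * (A \<omega> * B \<omega>)) powr s" for \<omega>
  have mA: "A \<in> borel_measurable M" unfolding A_def[abs_def]
    by (intro borel_measurable_sum) (auto intro: X_rv)
  have mB: "B \<in> borel_measurable M" unfolding B_def[abs_def]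
    by (intro borel_measurable_sum) (auto intro: Y_rv)
  have mOX: "OX \<in> borel_measurable M" unfolding OX_def[abs_def]
    by (intro borel_measurable_sum borel_measurable_times) (auto intro: X_rv)
  have mOY: "OY \<in> borel_measurable M" unfolding OY_def[abs_def]
    by (intro borel_measurable_sum borel_measurable_times) (auto intro: Y_rv)
  have pw: "SS n m \<omega> powr r \<le> Bd \<omega>" if pos: "\<forall>k. 1 \<le> k \<longrightarrow> 0 \<le> X k \<omega> \<and> 0 \<le> Y k \<omega>" for \<omega>
  proof -
    have Xp: "i \<in> {1..n} \<Longrightarrow> 0 \<le> X i \<omega>" for i using pos by auto
    have Yp: "i \<in> {1..m} \<Longrightarrow> 0 \<le> Y i \<omega>" for i using pos by auto
    have A0: "0 \<le> A \<omega>" unfolding A_def using Xp by (intro sum_nonneg) auto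
    have B0: "0 \<le> B \<omega>" unfolding B_def using Yp by (intro sum_nonneg) auto
    have OX0: "0 \<le> OX \<omega>" unfolding OX_def using Xp by (intro sum_nonneg mult_nonneg_nonneg) auto
    have OY0: "0 \<le> OY \<omega>" unfolding OY_def using Yp by (intro sum_nonneg mult_nonneg_nonneg) auto
    have S0: "0 \<le> SS n m \<omega>" unfolding SS_def using A0 B0 by (simp add: A_def B_def)
    have "SS n m \<omega> powr r = ((SS n m \<omega>)^2) powr s"
      unfolding s_def by (rule powr_sq_half[OF S0])
    also have "(SS n m \<omega>)^2 = (\<Sum>i=1..n. (X i \<omega>)^2) + OX \<omega> + (\<Sum>i=1..m. (Y i \<omega>)^2) + OY \<omega> + 2 * (A \<omega> * B \<omega>)"
      unfolding SS_sq_split OX_def OY_def A_def B_def ..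
    also have "(\<dots>) powr s \<le> (\<Sum>i=1..n. (X i \<omega>)^2) powr s + OX \<omega> powr s + (\<Sum>i=1..m. (Y i \<omega>)^2) powr s
        + OY \<omega> powr s + (2 * (A \<omega> * B \<omega>)) powr s"
      using OX0 OY0 A0 B0 s by (intro subadd5) (auto intro: sum_nonneg)
    also have "(\<Sum>i=1..n. (X i \<omega>)^2) powr s \<le> (\<Sum>i=1..n. X i \<omega> powr r)"
    proof -
      have "(\<Sum>i=1..n. (X i \<omega>)^2) powr s \<le> (\<Sum>i=1..n. ((X i \<omega>)^2) powr s)"
        using s by (intro powr_subadd_sum) auto
      also have "\<dots> = (\<Sum>i=1..n. X i \<omega> powr r)"
        unfolding s_def by (intro sum.cong refl powr_sq_half[symmetric] Xp)
      finally show ?thesis .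
    qed
    also have "(\<Sum>i=1..m. (Y i \<omega>)^2) powr s \<le> (\<Sum>i=1..m. Y i \<omega> powr r)"
    proof -
      have "(\<Sum>i=1..m. (Y i \<omega>)^2) powr s \<le> (\<Sum>i=1..m. ((Y i \<omega>)^2) powr s)"
        using s by (intro powr_subadd_sum) auto
      also have "\<dots> = (\<Sum>i=1..m. Y i \<omega> powr r)"
        unfolding s_def by (intro sum.cong refl powr_sq_half[symmetric] Yp)
      finally show ?thesis .
    qed
    finally show ?thesis unfolding Bd_def by simp
  qed
  have AEpw: "AE \<omega> in M. SS n m \<omega> powr r \<le> Bd \<omega>"
    using AE_pos by eventually_elim (rule pw)
  have OX0: "AE \<omega> in M. 0 \<le> OX \<omega>"
    using AE_pos by eventually_elim (auto simp: OX_def intro!: sum_nonneg mult_nonneg_nonneg)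
  have OY0: "AE \<omega> in M. 0 \<le> OY \<omega>"
    using AE_pos by eventually_elim (auto simp: OY_def intro!: sum_nonneg mult_nonneg_nonneg)
  have AB0: "AE \<omega> in M. 0 \<le> 2 * (A \<omega> * B \<omega>)"
    using AE_pos by eventually_elim (auto simp: A_def B_def intro!: sum_nonneg mult_nonneg_nonneg)
  have iOX: "integrable M OX" unfolding OX_def[abs_def] by (rule OX_int)
  have iOY: "integrable M OY" unfolding OY_def[abs_def] by (rule OY_int)
  have iAB: "integrable M (\<lambda>\<omega>. 2 * (A \<omega> * B \<omega>))" unfolding A_def B_def using AB_int by simp
  have mAB: "(\<lambda>\<omega>. 2 * (A \<omega> * B \<omega>)) \<in> borel_measurable M" using mA mB by measurable
  note JX = jensen_powr[OF mOX OX0 iOX s]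
  note JY = jensen_powr[OF mOY OY0 iOY s]
  note JAB = jensen_powr[OF mAB AB0 iAB s]
  have ia: "integrable M (\<lambda>\<omega>. \<Sum>i=1..n. X i \<omega> powr r)"
    by (intro Bochner_Integration.integrable_sum) (auto intro: Xkr_int)
  have ic: "integrable M (\<lambda>\<omega>. \<Sum>i=1..m. Y i \<omega> powr r)"
    by (intro Bochner_Integration.integrable_sum) (auto intro: Ykr_int)
  note I5 = int5[OF ia JX(1) ic JY(1) JAB(1)]
  have iBd: "integrable M Bd" unfolding Bd_def[abs_def] by (rule I5(1))
  have mS: "(\<lambda>\<omega>. SS n m \<omega> powr r) \<in> borel_measurable M" using SS_meas by measurable
  show iS: "integrable M (\<lambda>\<omega>. SS n m \<omega> powr r)"
  proof (rule Bochner_Integration.integrable_bound[OF iBd mS])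
    show "AE \<omega> in M. norm (SS n m \<omega> powr r) \<le> norm (Bd \<omega>)"
      using AEpw by eventually_elim auto
  qed
  have "(\<integral>\<omega>. SS n m \<omega> powr r \<partial>M) \<le> integral\<^sup>L M Bd"
    by (rule integral_mono_AE[OF iS iBd AEpw])
  also have "integral\<^sup>L M Bd = (\<integral>\<omega>. (\<Sum>i=1..n. X i \<omega> powr r) \<partial>M) + (\<integral>\<omega>. OX \<omega> powr s \<partial>M)
      + (\<integral>\<omega>. (\<Sum>i=1..m. Y i \<omega> powr r) \<partial>M) + (\<integral>\<omega>. OY \<omega> powr s \<partial>M) + (\<integral>\<omega>. (2 * (A \<omega> * B \<omega>)) powr s \<partial>M)"
    unfolding Bd_def[abs_def] by (rule I5(2))
  also have "(\<integral>\<omega>. (\<Sum>i=1..n. X i \<omega> powr r) \<partial>M) = real n * (\<integral>\<omega>. X 1 \<omega> powr r \<partial>M)"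
  proof -
    have "(\<integral>\<omega>. (\<Sum>i=1..n. X i \<omega> powr r) \<partial>M) = (\<Sum>i=1..n. \<integral>\<omega>. X i \<omega> powr r \<partial>M)"
      by (rule Bochner_Integration.integral_sum) (auto intro: Xkr_int)
    also have "\<dots> = (\<Sum>i=1..n. \<integral>\<omega>. X 1 \<omega> powr r \<partial>M)"
      by (intro sum.cong refl Xkr_mean) auto
    finally show ?thesis by simp
  qed
  also have "(\<integral>\<omega>. (\<Sum>i=1..m. Y i \<omega> powr r) \<partial>M) = real m * (\<integral>\<omega>. Y 1 \<omega> powr r \<partial>M)"
  proof -
    have "(\<integral>\<omega>. (\<Sum>i=1..m. Y i \<omega> powr r) \<partial>M) = (\<Sum>i=1..m. \<integral>\<omega>. Y i \<omega> powr r \<partial>M)"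
      by (rule Bochner_Integration.integral_sum) (auto intro: Ykr_int)
    also have "\<dots> = (\<Sum>i=1..m. \<integral>\<omega>. Y 1 \<omega> powr r \<partial>M)"
      by (intro sum.cong refl Ykr_mean) auto
    finally show ?thesis by simp
  qed
  also have "(\<integral>\<omega>. OX \<omega> powr s \<partial>M) \<le> real n powr r * mX powr r"
  proof -
    have "(\<integral>\<omega>. OX \<omega> powr s \<partial>M) \<le> (integral\<^sup>L M OX) powr s" by (rule JX(2))
    also have "integral\<^sup>L M OX = (real n * mX)^2 - real n * mX^2"
      unfolding OX_def[abs_def] by (rule OX_mean)
    also have "((real n * mX)^2 - real n * mX^2) powr s \<le> ((real n * mX)^2) powr s"
    proof (rule powr_mono2)
      show "0 \<le> (real n * mX)^2 - real n * mX^2"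
        using integral_nonneg_AE[OF OX0] OX_mean unfolding OX_def[abs_def] by simp
    qed (use s in auto)
    also have "((real n * mX)^2) powr s = (real n * mX) powr r"
      unfolding s_def using mX_nonneg by (intro powr_sq_half[symmetric]) simp
    also have "\<dots> = real n powr r * mX powr r"
      using mX_nonneg by (simp add: powr_mult)
    finally show ?thesis .
  qed
  also have "(\<integral>\<omega>. OY \<omega> powr s \<partial>M) \<le> real m powr r * mY powr r"
  proof -
    have "(\<integral>\<omega>. OY \<omega> powr s \<partial>M) \<le> (integral\<^sup>L M OY) powr s" by (rule JY(2))
    also have "integral\<^sup>L M OY = (real m * mY)^2 - real m * mY^2"
      unfolding OY_def[abs_def] by (rule OY_mean)
    also have "((real m * mY)^2 - real m * mY^2) powr s \<le> ((real m * mY)^2) powr s"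
    proof (rule powr_mono2)
      show "0 \<le> (real m * mY)^2 - real m * mY^2"
        using integral_nonneg_AE[OF OY0] OY_mean unfolding OY_def[abs_def] by simp
    qed (use s in auto)
    also have "((real m * mY)^2) powr s = (real m * mY) powr r"
      unfolding s_def using mY_nonneg by (intro powr_sq_half[symmetric]) simp
    also have "\<dots> = real m powr r * mY powr r"
      using mY_nonneg by (simp add: powr_mult)
    finally show ?thesis .
  qed
  also have "(\<integral>\<omega>. (2 * (A \<omega> * B \<omega>)) powr s \<partial>M) \<le> (2 * real n * real m * mX * mY) powr (r / 2)"
  proof -
    have "(\<integral>\<omega>. (2 * (A \<omega> * B \<omega>)) powr s \<partial>M) \<le> (\<integral>\<omega>. 2 * (A \<omega> * B \<omega>) \<partial>M) powr s" by (rule JAB(2))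
    also have "(\<integral>\<omega>. 2 * (A \<omega> * B \<omega>) \<partial>M) = 2 * real n * real m * mX * mY"
      using AB_mean unfolding A_def B_def by simp
    finally show ?thesis by (simp add: s_def)
  qed
  finally show "(\<integral>\<omega>. SS n m \<omega> powr r \<partial>M) \<le> real n * (\<integral>\<omega>. X 1 \<omega> powr r \<partial>M)
          + real m * (\<integral>\<omega>. Y 1 \<omega> powr r \<partial>M)
          + (2 * real n * real m * mX * mY) powr (r / 2)
          + real n powr r * mX powr r + real m powr r * mY powr r"
    by simp
qed

end

context A6 begin

lemma SV_meas: "(\<lambda>\<omega>. SS (V1 \<omega>) (V2 \<omega>) \<omega>) \<in> borel_measurable M"
proof -
  have g: "(\<lambda>\<omega>. (V1 \<omega>, V2 \<omega>)) \<in> M \<rightarrow>\<^sub>M count_space UNIV"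
  proof -
    have "(\<lambda>\<omega>. (V1 \<omega>, V2 \<omega>)) \<in> M \<rightarrow>\<^sub>M (count_space UNIV \<Otimes>\<^sub>M count_space UNIV)"
      using V1_rv V2_rv by (rule measurable_Pair)
    then show ?thesis by (simp add: pair_measure_countable)
  qed
  have f: "(\<lambda>\<omega>. SS (fst i) (snd i) \<omega>) \<in> borel_measurable M" for i :: "nat \<times> nat"
    by (rule SS_meas)
  show ?thesis
    using measurable_compose_countable[where f="\<lambda>i \<omega>. SS (fst i) (snd i) \<omega>", OF f g] by simp
qed

lemma V1V2_int: "integrable M (\<lambda>\<omega>. real (V1 \<omega>) * real (V2 \<omega>))"
  and V1V2_mean: "(\<integral>\<omega>. real (V1 \<omega>) * real (V2 \<omega>) \<partial>M) = (\<integral>\<omega>. real (V1 \<omega>) \<partial>M) * (\<integral>\<omega>. real (V2 \<omega>) \<partial>M)"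
  using indep_var_integrable[OF indep_V V1_int V2_int] indep_var_lebesgue_integral[OF indep_V V1_int V2_int]
  by auto

lemma main2:
  assumes r2: "r = 2"
  shows "integrable M (\<lambda>\<omega>. (SS (V1 \<omega>) (V2 \<omega>) \<omega>)^2)"
    and "(\<integral>\<omega>. (SS (V1 \<omega>) (V2 \<omega>) \<omega>)^2 \<partial>M) =
         (\<integral>\<omega>. real (V1 \<omega>) \<partial>M) * (\<integral>\<omega>. (X 1 \<omega> - (\<integral>\<omega>'. X 1 \<omega>' \<partial>M))^2 \<partial>M)
       + (\<integral>\<omega>. real (V2 \<omega>) \<partial>M) * (\<integral>\<omega>. (Y 1 \<omega> - (\<integral>\<omega>'. Y 1 \<omega>' \<partial>M))^2 \<partial>M)
       + 2 * (\<integral>\<omega>. real (V1 \<omega>) \<partial>M) * (\<integral>\<omega>. real (V2 \<omega>) \<partial>M)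
           * (\<integral>\<omega>. X 1 \<omega> \<partial>M) * (\<integral>\<omega>. Y 1 \<omega> \<partial>M)
       + (\<integral>\<omega>. real (V1 \<omega>)^2 \<partial>M) * (\<integral>\<omega>. X 1 \<omega> \<partial>M)^2
       + (\<integral>\<omega>. real (V2 \<omega>)^2 \<partial>M) * (\<integral>\<omega>. Y 1 \<omega> \<partial>M)^2"
proof -
  define vX where "vX = (\<integral>\<omega>. (X 1 \<omega>)^2 \<partial>M) - mX^2"
  define vY where "vY = (\<integral>\<omega>. (Y 1 \<omega>)^2 \<partial>M) - mY^2"
  define G where "G n m = real n * vX + real m * vY + (real n * mX + real m * mY)^2" for n m :: nat
  have G_eq: "G n m = (\<integral>\<omega>. (SS n m \<omega>)^2 \<partial>M)" for n m
    unfolding G_def vX_def vY_def using R2(2)[OF r2] by simp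
  have G0: "0 \<le> G n m" for n m unfolding G_eq by simp
  have V1sq: "integrable M (\<lambda>\<omega>. (real (V1 \<omega>))^2)"
  proof -
    have "(\<lambda>\<omega>. real (V1 \<omega>) powr r) = (\<lambda>\<omega>. (real (V1 \<omega>))^2)"
      using r2 by (intro ext) (simp add: powr_realpow')
    then show ?thesis using V1r_int by simp
  qed
  have V2sq: "integrable M (\<lambda>\<omega>. (real (V2 \<omega>))^2)"
  proof -
    have "(\<lambda>\<omega>. real (V2 \<omega>) powr r) = (\<lambda>\<omega>. (real (V2 \<omega>))^2)"
      using r2 by (intro ext) (simp add: powr_realpow')
    then show ?thesis using V2r_int by simp
  qed
  have Geq2: "G (V1 \<omega>) (V2 \<omega>) = real (V1 \<omega>) * vX + real (V2 \<omega>) * vY + (real (V1 \<omega>))^2 * mX^2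
      + 2 * mX * mY * (real (V1 \<omega>) * real (V2 \<omega>)) + (real (V2 \<omega>))^2 * mY^2" for \<omega>
    unfolding G_def by (simp add: power2_eq_square algebra_simps)
  have iG: "integrable M (\<lambda>\<omega>. G (V1 \<omega>) (V2 \<omega>))"
    unfolding Geq2 using V1_int V2_int V1sq V2sq V1V2_int by simp
  have intG: "(\<integral>\<omega>. G (V1 \<omega>) (V2 \<omega>) \<partial>M) = (\<integral>\<omega>. real (V1 \<omega>) \<partial>M) * vX + (\<integral>\<omega>. real (V2 \<omega>) \<partial>M) * vY
      + (\<integral>\<omega>. (real (V1 \<omega>))^2 \<partial>M) * mX^2 + 2 * mX * mY * ((\<integral>\<omega>. real (V1 \<omega>) \<partial>M) * (\<integral>\<omega>. real (V2 \<omega>) \<partial>M))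
      + (\<integral>\<omega>. (real (V2 \<omega>))^2 \<partial>M) * mY^2"
    unfolding Geq2 using V1_int V2_int V1sq V2sq V1V2_int
    by (simp add: Bochner_Integration.integral_add V1V2_mean)
  have mG: "(\<lambda>\<omega>. G (V1 \<omega>) (V2 \<omega>)) \<in> borel_measurable M" using iG by auto
  have "(\<integral>\<^sup>+\<omega>. ennreal ((SS (V1 \<omega>) (V2 \<omega>) \<omega>)^2) \<partial>M)
      = (\<integral>\<^sup>+\<omega>'. (\<integral>\<^sup>+\<omega>. ennreal ((SS (V1 \<omega>') (V2 \<omega>') \<omega>)^2) \<partial>M) \<partial>M)"
    by (rule cond_S[where F="\<lambda>x. x^2"]) simp
  also have "\<dots> = (\<integral>\<^sup>+\<omega>'. ennreal (G (V1 \<omega>') (V2 \<omega>')) \<partial>M)"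
  proof (intro nn_integral_cong)
    fix \<omega>' show "(\<integral>\<^sup>+\<omega>. ennreal ((SS (V1 \<omega>') (V2 \<omega>') \<omega>)^2) \<partial>M) = ennreal (G (V1 \<omega>') (V2 \<omega>'))"
      unfolding G_eq
      by (rule nn_integral_eq_integral[OF R2(1)[OF r2]]) simp
  qed
  also have "\<dots> = ennreal (\<integral>\<omega>. G (V1 \<omega>) (V2 \<omega>) \<partial>M)"
    by (rule nn_integral_eq_integral[OF iG]) (simp add: G0)
  finally have nn: "(\<integral>\<^sup>+\<omega>. ennreal ((SS (V1 \<omega>) (V2 \<omega>) \<omega>)^2) \<partial>M) = ennreal (\<integral>\<omega>. G (V1 \<omega>) (V2 \<omega>) \<partial>M)" .
  have mS: "(\<lambda>\<omega>. (SS (V1 \<omega>) (V2 \<omega>) \<omega>)^2) \<in> borel_measurable M" using SV_meas by measurable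
  show "integrable M (\<lambda>\<omega>. (SS (V1 \<omega>) (V2 \<omega>) \<omega>)^2)"
    by (rule integrableI_nonneg[OF mS]) (simp_all add: nn)
  have "(\<integral>\<omega>. (SS (V1 \<omega>) (V2 \<omega>) \<omega>)^2 \<partial>M) = enn2real (\<integral>\<^sup>+\<omega>. ennreal ((SS (V1 \<omega>) (V2 \<omega>) \<omega>)^2) \<partial>M)"
    by (rule integral_eq_nn_integral[OF mS]) simp
  also have "\<dots> = (\<integral>\<omega>. G (V1 \<omega>) (V2 \<omega>) \<partial>M)"
    unfolding nn using integral_nonneg_AE[of "\<lambda>\<omega>. G (V1 \<omega>) (V2 \<omega>)"] G0 by simp
  finally have fin: "(\<integral>\<omega>. (SS (V1 \<omega>) (V2 \<omega>) \<omega>)^2 \<partial>M) = (\<integral>\<omega>. G (V1 \<omega>) (V2 \<omega>) \<partial>M)" .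
  have vXe: "vX = (\<integral>\<omega>. (X 1 \<omega> - (\<integral>\<omega>'. X 1 \<omega>' \<partial>M))^2 \<partial>M)"
    unfolding vX_def using variance_eq[OF X1_int X1sq_int[OF r2]] by simp
  have vYe: "vY = (\<integral>\<omega>. (Y 1 \<omega> - (\<integral>\<omega>'. Y 1 \<omega>' \<partial>M))^2 \<partial>M)"
    unfolding vY_def using variance_eq[OF Y1_int Y1sq_int[OF r2]] by simp
  show "(\<integral>\<omega>. (SS (V1 \<omega>) (V2 \<omega>) \<omega>)^2 \<partial>M) =
         (\<integral>\<omega>. real (V1 \<omega>) \<partial>M) * (\<integral>\<omega>. (X 1 \<omega> - (\<integral>\<omega>'. X 1 \<omega>' \<partial>M))^2 \<partial>M)
       + (\<integral>\<omega>. real (V2 \<omega>) \<partial>M) * (\<integral>\<omega>. (Y 1 \<omega> - (\<integral>\<omega>'. Y 1 \<omega>' \<partial>M))^2 \<partial>M)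
       + 2 * (\<integral>\<omega>. real (V1 \<omega>) \<partial>M) * (\<integral>\<omega>. real (V2 \<omega>) \<partial>M)
           * (\<integral>\<omega>. X 1 \<omega> \<partial>M) * (\<integral>\<omega>. Y 1 \<omega> \<partial>M)
       + (\<integral>\<omega>. real (V1 \<omega>)^2 \<partial>M) * (\<integral>\<omega>. X 1 \<omega> \<partial>M)^2
       + (\<integral>\<omega>. real (V2 \<omega>)^2 \<partial>M) * (\<integral>\<omega>. Y 1 \<omega> \<partial>M)^2"
    unfolding fin intG vXe vYe by (simp add: algebra_simps)
qed

lemma mainr:
  assumes r2: "r < 2"
  shows "integrable M (\<lambda>\<omega>. SS (V1 \<omega>) (V2 \<omega>) \<omega> powr r)"
    and "(\<integral>\<omega>. SS (V1 \<omega>) (V2 \<omega>) \<omega> powr r \<partial>M) \<le>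
         (\<integral>\<omega>. real (V1 \<omega>) \<partial>M) * (\<integral>\<omega>. X 1 \<omega> powr r \<partial>M)
       + (\<integral>\<omega>. real (V2 \<omega>) \<partial>M) * (\<integral>\<omega>. Y 1 \<omega> powr r \<partial>M)
       + (2 * (\<integral>\<omega>. real (V1 \<omega>) \<partial>M) * (\<integral>\<omega>. real (V2 \<omega>) \<partial>M)
           * (\<integral>\<omega>. X 1 \<omega> \<partial>M) * (\<integral>\<omega>. Y 1 \<omega> \<partial>M)) powr (r / 2)
       + (\<integral>\<omega>. real (V1 \<omega>) powr r \<partial>M) * (\<integral>\<omega>. X 1 \<omega> \<partial>M) powr r
       + (\<integral>\<omega>. real (V2 \<omega>) powr r \<partial>M) * (\<integral>\<omega>. Y 1 \<omega> \<partial>M) powr r"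
proof -
  define s where "s = r / 2"
  have s: "0 < s" "s \<le> 1" using r by (auto simp: s_def)
  define rX where "rX = (\<integral>\<omega>. X 1 \<omega> powr r \<partial>M)"
  define rY where "rY = (\<integral>\<omega>. Y 1 \<omega> powr r \<partial>M)"
  have rX0: "0 \<le> rX" unfolding rX_def by simp
  have rY0: "0 \<le> rY" unfolding rY_def by simp
  define T where "T \<omega> = 2 * mX * mY * (real (V1 \<omega>) * real (V2 \<omega>))" for \<omega>
  define G where "G n m = real n * rX + real m * rY + (2 * real n * real m * mX * mY) powr s
     + real n powr r * mX powr r + real m powr r * mY powr r" for n m :: nat
  have G0: "0 \<le> G n m" for n m unfolding G_def using rX0 rY0 by simp
  have Geq2: "G (V1 \<omega>) (V2 \<omega>) = real (V1 \<omega>) * rX + real (V2 \<omega>) * rY + T \<omega> powr s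
     + real (V1 \<omega>) powr r * mX powr r + real (V2 \<omega>) powr r * mY powr r" for \<omega>
    unfolding G_def T_def by (simp add: algebra_simps)
  have iT: "integrable M T" unfolding T_def[abs_def] using V1V2_int by simp
  have mT: "T \<in> borel_measurable M" using iT by auto
  have T0: "AE \<omega> in M. 0 \<le> T \<omega>" unfolding T_def using mX_nonneg mY_nonneg by simp
  note JT = jensen_powr[OF mT T0 iT s]
  have iG: "integrable M (\<lambda>\<omega>. G (V1 \<omega>) (V2 \<omega>))"
    unfolding Geq2 using V1_int V2_int V1r_int V2r_int JT(1) by simp
  have intG: "(\<integral>\<omega>. G (V1 \<omega>) (V2 \<omega>) \<partial>M) = (\<integral>\<omega>. real (V1 \<omega>) \<partial>M) * rX + (\<integral>\<omega>. real (V2 \<omega>) \<partial>M) * rY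
     + (\<integral>\<omega>. T \<omega> powr s \<partial>M)
     + (\<integral>\<omega>. real (V1 \<omega>) powr r \<partial>M) * mX powr r + (\<integral>\<omega>. real (V2 \<omega>) powr r \<partial>M) * mY powr r"
    unfolding Geq2 using V1_int V2_int V1r_int V2r_int JT(1)
    by (simp add: Bochner_Integration.integral_add)
  have intT: "(\<integral>\<omega>. T \<omega> \<partial>M) = 2 * (\<integral>\<omega>. real (V1 \<omega>) \<partial>M) * (\<integral>\<omega>. real (V2 \<omega>) \<partial>M) * mX * mY"
    unfolding T_def using V1V2_mean by simp
  have "(\<integral>\<^sup>+\<omega>. ennreal (SS (V1 \<omega>) (V2 \<omega>) \<omega> powr r) \<partial>M)
      = (\<integral>\<^sup>+\<omega>'. (\<integral>\<^sup>+\<omega>. ennreal (SS (V1 \<omega>') (V2 \<omega>') \<omega> powr r) \<partial>M) \<partial>M)"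
    by (rule cond_S[where F="\<lambda>x. x powr r"]) simp
  also have "\<dots> \<le> (\<integral>\<^sup>+\<omega>'. ennreal (G (V1 \<omega>') (V2 \<omega>')) \<partial>M)"
  proof (intro nn_integral_mono)
    fix \<omega>'
    have "(\<integral>\<^sup>+\<omega>. ennreal (SS (V1 \<omega>') (V2 \<omega>') \<omega> powr r) \<partial>M) = ennreal (\<integral>\<omega>. SS (V1 \<omega>') (V2 \<omega>') \<omega> powr r \<partial>M)"
      by (rule nn_integral_eq_integral[OF Rr(1)[OF r2]]) simp
    also have "\<dots> \<le> ennreal (G (V1 \<omega>') (V2 \<omega>'))"
      unfolding G_def s_def rX_def rY_def by (intro ennreal_leI Rr(2)[OF r2])
    finally show "(\<integral>\<^sup>+\<omega>. ennreal (SS (V1 \<omega>') (V2 \<omega>') \<omega> powr r) \<partial>M) \<le> ennreal (G (V1 \<omega>') (V2 \<omega>'))" .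
  qed
  also have "\<dots> = ennreal (\<integral>\<omega>. G (V1 \<omega>) (V2 \<omega>) \<partial>M)"
    by (rule nn_integral_eq_integral[OF iG]) (simp add: G0)
  finally have nn: "(\<integral>\<^sup>+\<omega>. ennreal (SS (V1 \<omega>) (V2 \<omega>) \<omega> powr r) \<partial>M) \<le> ennreal (\<integral>\<omega>. G (V1 \<omega>) (V2 \<omega>) \<partial>M)" .
  have mS: "(\<lambda>\<omega>. SS (V1 \<omega>) (V2 \<omega>) \<omega> powr r) \<in> borel_measurable M" using SV_meas by measurable
  show iS: "integrable M (\<lambda>\<omega>. SS (V1 \<omega>) (V2 \<omega>) \<omega> powr r)"
  proof (rule integrableI_nonneg[OF mS])
    show "(\<integral>\<^sup>+\<omega>. ennreal (SS (V1 \<omega>) (V2 \<omega>) \<omega> powr r) \<partial>M) < \<infinity>"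
      using nn by (rule le_less_trans) simp
  qed simp
  have "ennreal (\<integral>\<omega>. SS (V1 \<omega>) (V2 \<omega>) \<omega> powr r \<partial>M) = (\<integral>\<^sup>+\<omega>. ennreal (SS (V1 \<omega>) (V2 \<omega>) \<omega> powr r) \<partial>M)"
    by (rule nn_integral_eq_integral[OF iS, symmetric]) simp
  with nn have le: "ennreal (\<integral>\<omega>. SS (V1 \<omega>) (V2 \<omega>) \<omega> powr r \<partial>M) \<le> ennreal (\<integral>\<omega>. G (V1 \<omega>) (V2 \<omega>) \<partial>M)"
    by simp
  have G0int: "0 \<le> (\<integral>\<omega>. G (V1 \<omega>) (V2 \<omega>) \<partial>M)" by (rule integral_nonneg_AE) (simp add: G0)
  have "(\<integral>\<omega>. SS (V1 \<omega>) (V2 \<omega>) \<omega> powr r \<partial>M) \<le> (\<integral>\<omega>. G (V1 \<omega>) (V2 \<omega>) \<partial>M)"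
    using le ennreal_le_iff[OF G0int] by simp
  also have "\<dots> \<le> (\<integral>\<omega>. real (V1 \<omega>) \<partial>M) * rX + (\<integral>\<omega>. real (V2 \<omega>) \<partial>M) * rY
     + (\<integral>\<omega>. T \<omega> \<partial>M) powr s
     + (\<integral>\<omega>. real (V1 \<omega>) powr r \<partial>M) * mX powr r + (\<integral>\<omega>. real (V2 \<omega>) powr r \<partial>M) * mY powr r"
    unfolding intG using JT(2) by simp
  finally show "(\<integral>\<omega>. SS (V1 \<omega>) (V2 \<omega>) \<omega> powr r \<partial>M) \<le>
         (\<integral>\<omega>. real (V1 \<omega>) \<partial>M) * (\<integral>\<omega>. X 1 \<omega> powr r \<partial>M)
       + (\<integral>\<omega>. real (V2 \<omega>) \<partial>M) * (\<integral>\<omega>. Y 1 \<omega> powr r \<partial>M)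
       + (2 * (\<integral>\<omega>. real (V1 \<omega>) \<partial>M) * (\<integral>\<omega>. real (V2 \<omega>) \<partial>M)
           * (\<integral>\<omega>. X 1 \<omega> \<partial>M) * (\<integral>\<omega>. Y 1 \<omega> \<partial>M)) powr (r / 2)
       + (\<integral>\<omega>. real (V1 \<omega>) powr r \<partial>M) * (\<integral>\<omega>. X 1 \<omega> \<partial>M) powr r
       + (\<integral>\<omega>. real (V2 \<omega>) powr r \<partial>M) * (\<integral>\<omega>. Y 1 \<omega> \<partial>M) powr r"
    unfolding intT rX_def rY_def s_def .
qed

end

theorem lemmaA6:
  fixes M :: "'a measure"
    and V1 V2 :: "'a \<Rightarrow> nat"
    and X Y :: "nat \<Rightarrow> 'a \<Rightarrow> real"
    and r :: real
  assumes M: "prob_space M"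
    and V1_rv: "V1 \<in> measurable M (count_space UNIV)"
    and V2_rv: "V2 \<in> measurable M (count_space UNIV)"
    and X_rv: "\<And>k. k \<ge> 1 \<Longrightarrow> X k \<in> borel_measurable M"
    and Y_rv: "\<And>k. k \<ge> 1 \<Longrightarrow> Y k \<in> borel_measurable M"
    and X_nonneg: "\<And>k. k \<ge> 1 \<Longrightarrow> AE \<omega> in M. X k \<omega> \<ge> 0"
    and Y_nonneg: "\<And>k. k \<ge> 1 \<Longrightarrow> AE \<omega> in M. Y k \<omega> \<ge> 0"
    and X_ident: "\<And>k. k \<ge> 1 \<Longrightarrow> distr M borel (X k) = distr M borel (X 1)"
    and Y_ident: "\<And>k. k \<ge> 1 \<Longrightarrow> distr M borel (Y k) = distr M borel (Y 1)"
    and indep: "prob_space.indep_vars M (\<lambda>_. borel) (rv_family V1 V2 X Y) rv_indices"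
    and r: "1 < r" "r \<le> 2"
    and XY_mom: "integrable M (\<lambda>\<omega>. X 1 \<omega> powr r + Y 1 \<omega> powr r)"
    and V_mom: "integrable M (\<lambda>\<omega>. real (V1 \<omega>) powr r + real (V2 \<omega>) powr r)"
  shows
    "(r = 2 \<longrightarrow>
       integrable M (\<lambda>\<omega>. ((\<Sum>i=1..V1 \<omega>. X i \<omega>) + (\<Sum>i=1..V2 \<omega>. Y i \<omega>))^2) \<and>
       (\<integral>\<omega>. ((\<Sum>i=1..V1 \<omega>. X i \<omega>) + (\<Sum>i=1..V2 \<omega>. Y i \<omega>))^2 \<partial>M) =
         (\<integral>\<omega>. real (V1 \<omega>) \<partial>M) * (\<integral>\<omega>. (X 1 \<omega> - (\<integral>\<omega>'. X 1 \<omega>' \<partial>M))^2 \<partial>M)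
       + (\<integral>\<omega>. real (V2 \<omega>) \<partial>M) * (\<integral>\<omega>. (Y 1 \<omega> - (\<integral>\<omega>'. Y 1 \<omega>' \<partial>M))^2 \<partial>M)
       + 2 * (\<integral>\<omega>. real (V1 \<omega>) \<partial>M) * (\<integral>\<omega>. real (V2 \<omega>) \<partial>M)
           * (\<integral>\<omega>. X 1 \<omega> \<partial>M) * (\<integral>\<omega>. Y 1 \<omega> \<partial>M)
       + (\<integral>\<omega>. real (V1 \<omega>)^2 \<partial>M) * (\<integral>\<omega>. X 1 \<omega> \<partial>M)^2
       + (\<integral>\<omega>. real (V2 \<omega>)^2 \<partial>M) * (\<integral>\<omega>. Y 1 \<omega> \<partial>M)^2)
   \<and> (r < 2 \<longrightarrow>
       integrable M (\<lambda>\<omega>. ((\<Sum>i=1..V1 \<omega>. X i \<omega>) + (\<Sum>i=1..V2 \<omega>. Y i \<omega>)) powr r) \<and>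
       (\<integral>\<omega>. ((\<Sum>i=1..V1 \<omega>. X i \<omega>) + (\<Sum>i=1..V2 \<omega>. Y i \<omega>)) powr r \<partial>M) \<le>
         (\<integral>\<omega>. real (V1 \<omega>) \<partial>M) * (\<integral>\<omega>. X 1 \<omega> powr r \<partial>M)
       + (\<integral>\<omega>. real (V2 \<omega>) \<partial>M) * (\<integral>\<omega>. Y 1 \<omega> powr r \<partial>M)
       + (2 * (\<integral>\<omega>. real (V1 \<omega>) \<partial>M) * (\<integral>\<omega>. real (V2 \<omega>) \<partial>M)
           * (\<integral>\<omega>. X 1 \<omega> \<partial>M) * (\<integral>\<omega>. Y 1 \<omega> \<partial>M)) powr (r / 2)
       + (\<integral>\<omega>. real (V1 \<omega>) powr r \<partial>M) * (\<integral>\<omega>. X 1 \<omega> \<partial>M) powr r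
       + (\<integral>\<omega>. real (V2 \<omega>) powr r \<partial>M) * (\<integral>\<omega>. Y 1 \<omega> \<partial>M) powr r)"
proof -
  interpret A6 M V1 V2 X Y r
    by (intro A6.intro A6_axioms.intro) (fact assms)+
  have Seq: "(\<Sum>i=1..V1 \<omega>. X i \<omega>) + (\<Sum>i=1..V2 \<omega>. Y i \<omega>) = SS (V1 \<omega>) (V2 \<omega>) \<omega>" for \<omega>
    by (simp add: SS_def)
  show ?thesis
    unfolding Seq using main2 mainr by blast
qed

end
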